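(* Let $n,m\in\mathbb{N}$. (i) Let $\phi\in C(\mathbb{R};\mathbb{C})$ and $\varrho:\mathbb{C}\to\mathbb{C}$, $\varrho(z)=\phi(\mathrm{Re}(z))$. Then $\mathcal{NN}^\varrho_{n,m,2n-1}$ is not universal. (ii) Let $\varrho:\mathbb{C}\to\mathbb{R}$ (real-valued). Then $\mathcal{NN}^\varrho_{n,m,2m-1}$ is not universal.
   Context: For $\varrho:\mathbb{C}\to\mathbb{C}$ and $n,m,W\in\mathbb{N}$, $\mathcal{NN}^\varrho_{n,m,W}$ denotes the set of all functions $\mathbb{C}^n\to\mathbb{C}^m$ of the form $V_L\circ\varrho^{\times W}\circ V_{L-1}\circ\cdots\circ\varrho^{\times W}\circ V_1$ with arbitrary depth $L\ge 2$, where $V_1:\mathbb{C}^n\to\mathbb{C}^W$, $V_2,\dots,V_{L-1}:\mathbb{C}^W\to\mathbb{C}^W$, $V_L:\mathbb{C}^W\to\mathbb{C}^m$ are $\mathbb{C}$-affine maps ($z\mapsto Az+b$ with complex $A,b$) and $\varrho^{\times W}$ applies $\varrho$ componentwise. A class $\mathcal{F}$ of functions $\mathbb{C}^n\to\mathbb{C}^m$ is universal if for every $g\in C(\mathbb{C}^n;\mathbb{C}^m)$, compact $K\subseteq\mathbb{C}^n$ and $\varepsilon>0$ there is $f\in\mathcal{F}$ with $\sup_{z\in K}\|f(z)-g(z)\|<\varepsilon$. *)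

theory Defs
  imports "HOL-Analysis.Analysis"
begin

text \<open>Hidden layers of width W are represented as functions nat \<Rightarrow> complex,
 only the coordinates i < W being meaningful (others are kept 0).\<close>

definition affine_in :: "nat \<Rightarrow> (nat \<Rightarrow> 'n::finite \<Rightarrow> complex) \<Rightarrow> (nat \<Rightarrow> complex)
    \<Rightarrow> complex^'n \<Rightarrow> (nat \<Rightarrow> complex)" where
  "affine_in W A b z = (\<lambda>i. if i < W then (\<Sum>j\<in>UNIV. A i j * z $ j) + b i else 0)"

definition affine_hid :: "nat \<Rightarrow> (nat \<Rightarrow> nat \<Rightarrow> complex) \<Rightarrow> (nat \<Rightarrow> complex)
    \<Rightarrow> (nat \<Rightarrow> complex) \<Rightarrow> (nat \<Rightarrow> complex)" where
  "affine_hid W A b h = (\<lambda>i. if i < W then (\<Sum>j<W. A i j * h j) + b i else 0)"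

definition affine_out :: "nat \<Rightarrow> ('m::finite \<Rightarrow> nat \<Rightarrow> complex) \<Rightarrow> ('m \<Rightarrow> complex)
    \<Rightarrow> (nat \<Rightarrow> complex) \<Rightarrow> complex^'m" where
  "affine_out W A b h = (\<chi> i. (\<Sum>j<W. A i j * h j) + b i)"

definition act :: "(complex \<Rightarrow> complex) \<Rightarrow> nat \<Rightarrow> (nat \<Rightarrow> complex) \<Rightarrow> (nat \<Rightarrow> complex)" where
  "act \<rho> W h = (\<lambda>i. if i < W then \<rho> (h i) else 0)"

text \<open>NN^rho_{n,m,W}: V_L o rho o V_{L-1} o ... o rho o V_1, L \<ge> 2 arbitrary;
 the list Hs holds the L-2 hidden affine maps V_2,...,V_{L-1} (in order).\<close>

definition NN :: "(complex \<Rightarrow> complex) \<Rightarrow> nat \<Rightarrow> (complex^'n::finite \<Rightarrow> complex^'m::finite) set" where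
  "NN \<rho> W = {f. \<exists>A1 b1 (Hs :: ((nat \<Rightarrow> nat \<Rightarrow> complex) \<times> (nat \<Rightarrow> complex)) list) AL bL.
      f = (\<lambda>z. affine_out W AL bL
              (fold (\<lambda>(A, b) h. act \<rho> W (affine_hid W A b h)) Hs
                 (act \<rho> W (affine_in W A1 b1 z))))}"

definition universal :: "('a::topological_space \<Rightarrow> 'b::real_normed_vector) set \<Rightarrow> bool" where
  "universal F \<longleftrightarrow> (\<forall>g. continuous_on UNIV g \<longrightarrow> (\<forall>K. compact K \<longrightarrow>
      (\<forall>\<epsilon>>0. \<exists>f\<in>F. \<forall>z\<in>K. norm (f z - g z) < \<epsilon>)))"

end

theory Submission
  imports Defs
begin


lemma re_inner: "Re (\<Sum>j\<in>UNIV. A j * x $ j) = inner (\<chi> j. cnj (A j)) (x :: complex^'n::finite)"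
  unfolding inner_vec_def by (simp add: inner_complex_def Re_sum)

lemma kernel_exists:
  fixes A :: "nat \<Rightarrow> 'n::finite \<Rightarrow> complex"
  assumes "W < 2*CARD('n)"
  shows "\<exists>v::complex^'n. v \<noteq> 0 \<and> (\<forall>i<W. \<forall>c::real. Re (\<Sum>j\<in>UNIV. A i j * (c *\<^sub>R v)$j) = 0)"
proof -
  define w where "w i = (\<chi> j. cnj (A i j) :: complex^'n)" for i
  define S where "S = w ` {..<W}"
  have "card S \<le> W" unfolding S_def using card_image_le[of "{..<W}" w] by simp
  moreover have "dim S \<le> card S" by (rule dim_le_card) (auto simp: S_def span_base)
  ultimately have "span S \<noteq> UNIV"
    using assms by (metis dim_UNIV dim_span DIM_cart DIM_complex leD le_trans mult.commute)
  then obtain a where a: "a \<noteq> 0" "\<forall>x\<in>span S. a \<bullet> x = 0" using span_not_UNIV_orthogonal by blast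
  have "Re (\<Sum>j\<in>UNIV. A i j * (c *\<^sub>R a)$j) = 0" if "i<W" for i c
  proof -
    have "w i \<in> span S" using that by (auto simp: S_def span_base)
    then have "a \<bullet> w i = 0" using a by auto
    then show ?thesis unfolding re_inner w_def[symmetric] by (simp add: inner_commute)
  qed
  then show ?thesis using a by blast
qed

lemma fold_real:
  assumes "\<forall>j. x j \<in> \<real>" "\<And>p y j. F p y j \<in> \<real>"
  shows "\<forall>j. fold F Hs x j \<in> \<real>"
  using assms(1) by (induction Hs arbitrary: x) (auto simp: assms(2))



lemma out_hyper:
  fixes AL :: "'m::finite \<Rightarrow> nat \<Rightarrow> complex"
  assumes "W < 2*CARD('m)"
  shows "\<exists>u::complex^'m. u \<noteq> 0 \<and> (\<forall>h. (\<forall>j. h j \<in> \<real>) \<longrightarrow> u \<bullet> affine_out W AL bL h = u \<bullet> (\<chi> i. bL i))"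
proof -
  define w where "w j = (\<chi> i. AL i j :: complex^'m)" for j
  define S where "S = w ` {..<W}"
  have "card S \<le> W" unfolding S_def using card_image_le[of "{..<W}" w] by simp
  moreover have "dim S \<le> card S" by (rule dim_le_card) (auto simp: S_def span_base)
  ultimately have "span S \<noteq> UNIV"
    using assms by (metis dim_UNIV dim_span DIM_cart DIM_complex leD le_trans mult.commute)
  then obtain a where a: "a \<noteq> 0" "\<forall>x\<in>span S. a \<bullet> x = 0" using span_not_UNIV_orthogonal by blast
  have "a \<bullet> affine_out W AL bL h = a \<bullet> (\<chi> i. bL i)" if h: "\<forall>j. h j \<in> \<real>" for h
  proof -
    have hr: "h j = of_real (Re (h j))" for j using h by (metis Reals_cases Re_complex_of_real)
    have "affine_out W AL bL h - (\<chi> i. bL i) = (\<Sum>j<W. Re (h j) *\<^sub>R w j)"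
    proof (subst vec_eq_iff, intro allI)
      fix i
      have "(\<Sum>j<W. AL i j * h j) = (\<Sum>j<W. Re (h j) *\<^sub>R AL i j)"
        by (rule sum.cong[OF refl], subst hr) (simp add: scaleR_conv_of_real)
      then show "(affine_out W AL bL h - (\<chi> i. bL i)) $ i = (\<Sum>j<W. Re (h j) *\<^sub>R w j) $ i"
        by (simp add: affine_out_def w_def)
    qed
    moreover have "(\<Sum>j<W. Re (h j) *\<^sub>R w j) \<in> span S"
      by (intro span_sum span_scale) (auto simp: S_def span_base)
    ultimately have "a \<bullet> (affine_out W AL bL h - (\<chi> i. bL i)) = 0" using a by simp
    then show ?thesis by (simp add: inner_diff_right)
  qed
  then show ?thesis using a by blast
qed



lemma part1:
  fixes \<phi> :: "real \<Rightarrow> complex"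
  assumes "continuous_on UNIV \<phi>"
  shows "\<not> universal (NN (\<lambda>z. \<phi> (Re z)) (2 * CARD('n::finite) - 1) :: (complex^'n \<Rightarrow> complex^'m::finite) set)"
proof
  define W where "W = 2 * CARD('n) - 1"
  define \<rho> where "\<rho> = (\<lambda>z. \<phi> (Re z))"
  assume U: "universal (NN (\<lambda>z. \<phi> (Re z)) (2 * CARD('n::finite) - 1) :: (complex^'n \<Rightarrow> complex^'m::finite) set)"
  define g :: "complex^'n \<Rightarrow> complex^'m" where "g z = (\<chi> i. complex_of_real (norm z))" for z
  have "continuous_on UNIV g" unfolding g_def by (intro continuous_intros)
  from U[unfolded universal_def, rule_format, OF this, of "cball 0 1" "1/2"]
  obtain f where fN: "f \<in> (NN \<rho> W :: (complex^'n \<Rightarrow> complex^'m) set)"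
     and fK: "\<forall>z\<in>cball 0 1. norm (f z - g z) < 1/2"
    by (auto simp: W_def \<rho>_def)
  then obtain A1 b1 Hs AL bL where feq: "f = (\<lambda>z. affine_out W AL bL
              (fold (\<lambda>(A, b) h. act \<rho> W (affine_hid W A b h)) Hs
                 (act \<rho> W (affine_in W A1 b1 z))))" unfolding NN_def by blast
  have "W < 2 * CARD('n)" unfolding W_def by simp
  then obtain v :: "complex^'n" where v: "v \<noteq> 0" "\<forall>i<W. \<forall>c::real. Re (\<Sum>j\<in>UNIV. A1 i j * (c *\<^sub>R v)$j) = 0"
    using kernel_exists[of W A1] by blast
  define v' where "v' = (1/norm v) *\<^sub>R v"
  have nv: "norm v' = 1" using v(1) by (simp add: v'_def)
  have "act \<rho> W (affine_in W A1 b1 v') = act \<rho> W (affine_in W A1 b1 0)"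
  proof
    fix i
    show "act \<rho> W (affine_in W A1 b1 v') i = act \<rho> W (affine_in W A1 b1 0) i"
      using v(2)[rule_format, of i "1/norm v"]
      by (simp add: act_def affine_in_def \<rho>_def v'_def)
  qed
  then have fe: "f v' = f 0" by (simp add: feq)
  have g0: "g 0 = 0" by (simp add: g_def vec_eq_iff)
  have "norm (f v' - g v') < 1/2" "norm (f 0 - g 0) < 1/2" using fK nv by auto
  moreover have "g v' = (f 0 - g 0) - (f v' - g v')" using fe g0 by simp
  ultimately have "norm (g v') < 1"
    by (metis norm_triangle_ineq4 add_strict_mono field_sum_of_halves order_le_less_trans)
  moreover have "norm (g v' $ undefined) \<le> norm (g v')" by (rule Finite_Cartesian_Product.norm_nth_le)
  moreover have "g v' $ undefined = 1" using nv by (simp add: g_def)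
  ultimately show False by simp
qed



lemma part2:
  fixes \<rho> :: "complex \<Rightarrow> complex"
  assumes real: "\<forall>z. \<rho> z \<in> \<real>"
  shows "\<not> universal (NN \<rho> (2 * CARD('m::finite) - 1) :: (complex^'n::finite \<Rightarrow> complex^'m) set)"
proof
  define W where "W = 2 * CARD('m) - 1"
  assume U: "universal (NN \<rho> (2 * CARD('m::finite) - 1) :: (complex^'n::finite \<Rightarrow> complex^'m) set)"
  define Q :: "(complex^'m) set" where "Q = insert 0 Basis"
  have "finite Q" by (simp add: Q_def)
  then obtain hb where hb: "bij_betw hb {0..<card Q} Q" using ex_bij_betw_nat_finite by blast
  define p :: "nat \<Rightarrow> complex^'n" where "p k = (\<chi> j. of_nat k)" for k
  define S where "S = p ` {0..<card Q}"
  define f0 where "f0 z = hb (nat \<lfloor>Re (z $ undefined)\<rfloor>)" for z :: "complex^'n"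
  have fS: "finite S" by (simp add: S_def)
  have "continuous_on S f0" using fS by (rule continuous_on_finite)
  moreover have "closedin (top_of_set UNIV) S" using finite_imp_closed[OF fS] by simp
  ultimately obtain g where gc: "continuous_on UNIV g" and gS: "\<And>x. x \<in> S \<Longrightarrow> g x = f0 x"
    by (rule Tietze_unbounded) blast+
  define D where "D = real DIM(complex^'m)"
  have D0: "D > 0" by (simp add: D_def)
  define \<epsilon> where "\<epsilon> = 1 / (2 * D)"
  have "\<epsilon> > 0" using D0 by (simp add: \<epsilon>_def)
  from U[unfolded universal_def, rule_format, OF gc finite_imp_compact[OF fS] this]
  obtain f where fN: "f \<in> (NN \<rho> W :: (complex^'n \<Rightarrow> complex^'m) set)"
     and fK: "\<forall>z\<in>S. norm (f z - g z) < \<epsilon>"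
    by (auto simp: W_def)
  then obtain A1 b1 Hs AL bL where feq: "f = (\<lambda>z. affine_out W AL bL
              (fold (\<lambda>(A, b) h. act \<rho> W (affine_hid W A b h)) Hs
                 (act \<rho> W (affine_in W A1 b1 z))))" unfolding NN_def by blast
  have "W < 2 * CARD('m)" unfolding W_def by simp
  then obtain u :: "complex^'m" where u: "u \<noteq> 0"
     "\<forall>h. (\<forall>j. h j \<in> \<real>) \<longrightarrow> u \<bullet> affine_out W AL bL h = u \<bullet> (\<chi> i. bL i)"
    using out_hyper[of W AL bL] by blast
  have fu: "u \<bullet> f z = u \<bullet> (\<chi> i. bL i)" for z
  proof -
    have "\<forall>j. fold (\<lambda>(A, b) h. act \<rho> W (affine_hid W A b h)) Hs
                 (act \<rho> W (affine_in W A1 b1 z)) j \<in> \<real>"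
      by (rule fold_real) (simp_all add: act_def real case_prod_beta)
    then show ?thesis using u(2) unfolding feq by blast
  qed
  define u' where "u' = (1 / norm u) *\<^sub>R u"
  define c where "c = u' \<bullet> (\<chi> i. bL i)"
  have nu: "norm u' = 1" using u(1) by (simp add: u'_def)
  have fu': "u' \<bullet> f z = c" for z using fu[of z] by (simp add: u'_def c_def)
  have key: "\<bar>u' \<bullet> q - c\<bar> < \<epsilon>" if qQ: "q \<in> Q" for q
  proof -
    obtain k where k: "k < card Q" "hb k = q" using hb qQ
      unfolding bij_betw_def by (metis atLeastLessThan_iff imageE)
    have zS: "p k \<in> S" using k by (simp add: S_def)
    have "g (p k) = q" using gS[OF zS] k by (simp add: f0_def p_def)
    then have "u' \<bullet> q - c = u' \<bullet> (g (p k) - f (p k))" using fu' by (simp add: inner_diff_right)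
    also have "\<bar>\<dots>\<bar> \<le> norm u' * norm (g (p k) - f (p k))" by (rule Cauchy_Schwarz_ineq2)
    also have "\<dots> < \<epsilon>" using fK zS nu by (simp add: norm_minus_commute)
    finally show ?thesis .
  qed
  have c: "\<bar>c\<bar> < \<epsilon>" using key[of 0] by (simp add: Q_def)
  have "\<bar>u' \<bullet> b\<bar> < 1 / D" if "b \<in> Basis" for b
    using key[of b] that c by (simp add: Q_def \<epsilon>_def)
  then have "(\<Sum>b\<in>Basis. \<bar>u' \<bullet> b\<bar>) < (\<Sum>b\<in>(Basis::(complex^'m) set). 1 / D)"
    by (intro sum_strict_mono) auto
  also have "\<dots> = 1" using D0 by (simp add: D_def)
  finally have "(\<Sum>b\<in>Basis. \<bar>u' \<bullet> b\<bar>) < 1" .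
  moreover have "norm u' \<le> (\<Sum>b\<in>Basis. \<bar>u' \<bullet> b\<bar>)" by (rule norm_le_l1)
  ultimately show False using nu by simp
qed

theorem theorem6p4:
  shows "(\<forall>\<phi> :: real \<Rightarrow> complex. continuous_on UNIV \<phi> \<longrightarrow>
            \<not> universal (NN (\<lambda>z. \<phi> (Re z)) (2 * CARD('n::finite) - 1)
                          :: (complex^'n \<Rightarrow> complex^'m::finite) set))
       \<and> (\<forall>\<rho> :: complex \<Rightarrow> complex. (\<forall>z. \<rho> z \<in> \<real>) \<longrightarrow>
            \<not> universal (NN \<rho> (2 * CARD('m) - 1) :: (complex^'n \<Rightarrow> complex^'m) set))"
  using part1 part2 by blast

end
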